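(* Let $E$ be a nonzero real Banach space and $g\colon E^*\times E^{**}\to\,]{-}\infty,\infty]$ be proper, convex and lower semicontinuous with $g(y^*,y^{**})\ge\langle y^*,y^{**}\rangle$ for all $(y^*,y^{**})\in E^*\times E^{**}$. Let $(z^*,z^{**})\in E^*\times E^{**}$ satisfy $g(z^*,z^{**})=\langle z^*,z^{**}\rangle$. Then $g^*(z^{**},\widehat{z^*})=\langle z^*,z^{**}\rangle$.
   Context: $\widehat{z^*}\in E^{***}$ is the canonical image of $z^*$. $(E^*\times E^{**})^*$ is identified with $E^{**}\times E^{***}$ via $\langle (y^*,y^{**}),(x^{**},x^{***})\rangle=\langle y^*,x^{**}\rangle+\langle y^{**},x^{***}\rangle$, and $g^*$ is the Fenchel conjugate of $g$ with respect to this pairing. *)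

theory Defs
  imports "HOL-Analysis.Analysis" "HOL-Library.Extended_Real"
begin

(* Duals: E* = 'a =>L real, E** = ('a =>L real) =>L real, E*** = E** =>L real.
   The pairing of y* in E* with y** in E** is  blinfun_apply y** y*. *)

definition proper_fun :: "('b \<Rightarrow> ereal) \<Rightarrow> bool" where
  "proper_fun g \<longleftrightarrow> (\<forall>x. g x \<noteq> -\<infinity>) \<and> (\<exists>x. g x \<noteq> \<infinity>)"

definition convex_fun :: "('b::real_vector \<Rightarrow> ereal) \<Rightarrow> bool" where
  "convex_fun g \<longleftrightarrow> convex {(x, r::real). g x \<le> ereal r}"

definition lsc_fun :: "('b::topological_space \<Rightarrow> ereal) \<Rightarrow> bool" where
  "lsc_fun g \<longleftrightarrow> (\<forall>x. g x \<le> Liminf (at x) g)"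

definition canon_emb :: "('a::real_normed_vector \<Rightarrow>\<^sub>L real) \<Rightarrow> ((('a \<Rightarrow>\<^sub>L real) \<Rightarrow>\<^sub>L real) \<Rightarrow>\<^sub>L real)" where
  "canon_emb z = Blinfun (\<lambda>x. blinfun_apply x z)"

definition fenchel_conj ::
  "(('a::real_normed_vector \<Rightarrow>\<^sub>L real) \<times> (('a \<Rightarrow>\<^sub>L real) \<Rightarrow>\<^sub>L real) \<Rightarrow> ereal)
   \<Rightarrow> (('a \<Rightarrow>\<^sub>L real) \<Rightarrow>\<^sub>L real) \<times> ((('a \<Rightarrow>\<^sub>L real) \<Rightarrow>\<^sub>L real) \<Rightarrow>\<^sub>L real) \<Rightarrow> ereal" where
  "fenchel_conj g = (\<lambda>(x2, x3). SUP p. ereal (blinfun_apply x2 (fst p) + blinfun_apply x3 (snd p)) - g p)"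

end

theory Submission
  imports Defs
begin

lemma key_ineq:
  fixes c r d K :: real
  assumes "\<And>t. 0 < t \<Longrightarrow> t \<le> 1 \<Longrightarrow> d \<le> t * K"
  shows "d \<le> 0"
proof (rule ccontr)
  assume "\<not> d \<le> 0"
  hence d: "d > 0" by simp
  define t where "t = min (1/2) (d / (2 * (\<bar>K\<bar> + 1)))"
  have t0: "t > 0" using d by (simp add: t_def)
  have t1: "t \<le> 1" by (simp add: t_def)
  have "t \<le> d / (2 * (\<bar>K\<bar> + 1))" by (simp add: t_def)
  hence "t * (\<bar>K\<bar> + 1) \<le> d / 2"
    by (simp add: field_simps)
  moreover have "t * K \<le> t * (\<bar>K\<bar> + 1)" using t0 by (intro mult_left_mono) auto
  ultimately have "t * K < d" using d by linarith
  with assms[OF t0 t1] show False by linarith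
qed

theorem lemma7p3:
  fixes g :: "('a::banach \<Rightarrow>\<^sub>L real) \<times> (('a \<Rightarrow>\<^sub>L real) \<Rightarrow>\<^sub>L real) \<Rightarrow> ereal"
    and z1 :: "'a \<Rightarrow>\<^sub>L real" and z2 :: "('a \<Rightarrow>\<^sub>L real) \<Rightarrow>\<^sub>L real"
  assumes "\<exists>x::'a. x \<noteq> 0"
    and "proper_fun g" and "convex_fun g" and "lsc_fun g"
    and "\<And>y1 y2. g (y1, y2) \<ge> ereal (blinfun_apply y2 y1)"
    and "g (z1, z2) = ereal (blinfun_apply z2 z1)"
  shows "fenchel_conj g (z2, canon_emb z1) = ereal (blinfun_apply z2 z1)"
proof -
  have bl: "bounded_linear (\<lambda>x::('a \<Rightarrow>\<^sub>L real) \<Rightarrow>\<^sub>L real. blinfun_apply x z1)"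
    by (rule bounded_bilinear.bounded_linear_left[OF bounded_bilinear_blinfun_apply])
  have ce: "blinfun_apply (canon_emb z1) v = blinfun_apply v z1" for v
    unfolding canon_emb_def using bounded_linear_Blinfun_apply[OF bl] by simp
  define c where "c = blinfun_apply z2 z1"
  have cvx: "convex {(x, r::real). g x \<le> ereal r}" using assms(3) by (simp add: convex_fun_def)
  have gz: "g (z1, z2) \<le> ereal c" using assms(6) by (simp add: c_def)
  have bound: "ereal (blinfun_apply z2 u + blinfun_apply v z1) - g (u, v) \<le> ereal c" for u v
  proof (cases "g (u, v)")
    case (real r)
    have gu: "g (u, v) \<le> ereal r" using real by simp
    define a where "a = blinfun_apply z2 u + blinfun_apply v z1"
    define w where "w = blinfun_apply v u"
    have "a - c - r \<le> 0"
    proof (rule key_ineq[where K = "a - c - w"])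
      fix t :: real assume t0: "0 < t" and t1: "t \<le> 1"
      have mem: "((1 - t) *\<^sub>R (z1, z2) + t *\<^sub>R (u, v), (1 - t) * c + t * r)
          \<in> {(x, r::real). g x \<le> ereal r}"
        using convexD[OF cvx, of "((z1,z2), c)" "((u,v), r)" "1 - t" t] gz gu t0 t1
        by simp
      hence le: "g ((1 - t) *\<^sub>R z1 + t *\<^sub>R u, (1 - t) *\<^sub>R z2 + t *\<^sub>R v) \<le> ereal ((1 - t) * c + t * r)"
        by simp
      have "ereal (blinfun_apply ((1 - t) *\<^sub>R z2 + t *\<^sub>R v) ((1 - t) *\<^sub>R z1 + t *\<^sub>R u))
            \<le> ereal ((1 - t) * c + t * r)"
        using assms(5) le order_trans by blast
      hence ineq: "blinfun_apply ((1 - t) *\<^sub>R z2 + t *\<^sub>R v) ((1 - t) *\<^sub>R z1 + t *\<^sub>R u)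
            \<le> (1 - t) * c + t * r" by simp
      have exp: "blinfun_apply ((1 - t) *\<^sub>R z2 + t *\<^sub>R v) ((1 - t) *\<^sub>R z1 + t *\<^sub>R u)
          = (1 - t)^2 * c + (1 - t) * t * a + t^2 * w"
        unfolding c_def a_def w_def
        by (simp only: blinfun.add_left blinfun.add_right blinfun.scaleR_left
            blinfun.scaleR_right scaleR_blinfun.rep_eq) (simp add: algebra_simps power2_eq_square)
      have "t * (a - c - r) \<le> t * (t * (a - c - w))"
        using ineq unfolding exp by (simp add: algebra_simps power2_eq_square)
      thus "a - c - r \<le> t * (a - c - w)" using t0 by simp
    qed
    thus ?thesis using real by (simp add: a_def)
  next
    case PInf thus ?thesis by simp
  next
    case MInf
    with assms(5)[of v u] show ?thesis by simp
  qed
  have "fenchel_conj g (z2, canon_emb z1)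
      = (SUP p. ereal (blinfun_apply z2 (fst p) + blinfun_apply (snd p) z1) - g p)"
    by (simp add: fenchel_conj_def ce)
  also have "\<dots> = ereal c"
  proof (rule antisym)
    show "(SUP p. ereal (blinfun_apply z2 (fst p) + blinfun_apply (snd p) z1) - g p) \<le> ereal c"
      using bound by (intro SUP_least) (metis prod.collapse)
    have "ereal c = ereal (blinfun_apply z2 (fst (z1,z2)) + blinfun_apply (snd (z1,z2)) z1) - g (z1,z2)"
      using assms(6) by (simp add: c_def)
    also have "\<dots> \<le> (SUP p. ereal (blinfun_apply z2 (fst p) + blinfun_apply (snd p) z1) - g p)"
      by (rule SUP_upper) simp
    finally show "ereal c \<le> (SUP p. ereal (blinfun_apply z2 (fst p) + blinfun_apply (snd p) z1) - g p)" .
  qed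
  finally show ?thesis by (simp add: c_def)
qed

end
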